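(* Let $F$ be a $4$-regular graph, let $P$ be a circuit partition of $F$, and let $E\subseteq E(F)$ be such that each circuit of $P$ traverses at most one edge of $E$. If $\Gamma$ is a cycle spanning set of $F-E$, then $\Gamma\cup P$ (with the circuits of $P$ given arbitrary orientations) is a cycle spanning set of $F$. If moreover $\Gamma$ is integral, then $\Gamma\cup P$ is an integral cycle spanning set of $F$.
   Context: Graphs: $G=(V,H,E,\epsilon)$ with finite sets of vertices $V$ and half-edges $H$, a partition $E$ of $H$ into unordered pairs (edges), and $\epsilon:H\to V$; loops and multiple edges allowed. For $E'\subseteq E(G)$, $G-E'$ is obtained by deleting the edges of $E'$. A directed version orders each edge as (tail, head). A single transition is an unordered pair of distinct half-edges incident with a common vertex; a directed single transition is such an ordered pair. A closed walk is a sequence $((h_1,h_2),\dots,(h_{n-1},h_n))$ of directed single transitions with $\{h_2,h_3\},\{h_4,h_5\},\dots,\{h_n,h_1\}$ edges, up to cyclic shift. For a directed version $D$ and closed walk $W$, $\sigma(D,W)\in\mathbb Z^{E}$ counts, at each edge $e$, traversals of $e$ along its direction minus traversals against it. A circuit is a nonempty closed walk using each half-edge at most once, with orientation forgotten. The cycle space of $D$ is the right null space over $\mathbb Q$ of its vertex-edge incidence matrix (entry $1$ if $v$ is incident to the tail but not head of $e$, $-1$ if to the head but not tail, $0$ otherwise). A cycle basis of $G$ is a set $B$ of closed walks such that the vectors $\sigma(D,W)$, $W\in B$, are pairwise distinct and form a basis of the cycle space of $D$. A cycle spanning set is a set of closed walks containing a cycle basis. A cycle spanning set $B$ is integral if $\sigma(D,W)$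 lies in the $\mathbb Z$-span of $\{\sigma(D,W'):W'\in B\}$ for every closed walk $W$ of $G$. $F$ is $4$-regular if every vertex is incident with exactly $4$ half-edges. A circuit partition $P$ of $F$ is a set of circuits of $F$ such that every half-edge lies in exactly one single transition of exactly one circuit of $P$. *)

theory Defs
  imports Complex_Main
begin

text \<open>A graph is given by a vertex set V, a half-edge set H, a set Ed of edges
(a partition of H into unordered pairs) and the incidence map eps : H -> V.\<close>

definition is_graph :: "'v set \<Rightarrow> 'h set \<Rightarrow> 'h set set \<Rightarrow> ('h \<Rightarrow> 'v) \<Rightarrow> bool" where
  "is_graph V H Ed eps \<longleftrightarrow> finite V \<and> finite H \<and> eps ` H \<subseteq> V \<and>
     (\<forall>e\<in>Ed. card e = 2 \<and> e \<subseteq> H) \<and> \<Union>Ed = H \<and>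
     (\<forall>e\<in>Ed. \<forall>e'\<in>Ed. e \<noteq> e' \<longrightarrow> e \<inter> e' = {})"

definition del_H :: "'h set \<Rightarrow> 'h set set \<Rightarrow> 'h set" where
  "del_H H Ed' = H - \<Union>Ed'"

definition four_regular :: "'v set \<Rightarrow> 'h set \<Rightarrow> ('h \<Rightarrow> 'v) \<Rightarrow> bool" where
  "four_regular V H eps \<longleftrightarrow> (\<forall>v\<in>V. card {h\<in>H. eps h = v} = 4)"

definition orientation :: "'h set set \<Rightarrow> ('h set \<Rightarrow> 'h) \<Rightarrow> bool" where
  "orientation Ed tail \<longleftrightarrow> (\<forall>e\<in>Ed. tail e \<in> e)"

definition head_of :: "('h set \<Rightarrow> 'h) \<Rightarrow> 'h set \<Rightarrow> 'h" where
  "head_of tail e = the_elem (e - {tail e})"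

text \<open>Closed walks: lists of directed single transitions (h_1,h_2),...,(h_{n-1},h_n)
 such that {h_2,h_3},...,{h_n,h_1} are edges.\<close>
definition walk_edge :: "('h \<times> 'h) list \<Rightarrow> nat \<Rightarrow> 'h set" where
  "walk_edge W i = {snd (W ! i), fst (W ! ((i + 1) mod length W))}"

definition closed_walk :: "'h set \<Rightarrow> 'h set set \<Rightarrow> ('h \<Rightarrow> 'v) \<Rightarrow> ('h \<times> 'h) list \<Rightarrow> bool" where
  "closed_walk H Ed eps W \<longleftrightarrow>
     (\<forall>(a, b)\<in>set W. a \<in> H \<and> b \<in> H \<and> a \<noteq> b \<and> eps a = eps b) \<and>
     (\<forall>i<length W. walk_edge W i \<in> Ed)"

definition circuit :: "'h set \<Rightarrow> 'h set set \<Rightarrow> ('h \<Rightarrow> 'v) \<Rightarrow> ('h \<times> 'h) list \<Rightarrow> bool" where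
  "circuit H Ed eps W \<longleftrightarrow> closed_walk H Ed eps W \<and> W \<noteq> [] \<and>
     distinct (concat (map (\<lambda>(a, b). [a, b]) W))"

text \<open>A circuit partition, each circuit given with some orientation (and starting point).\<close>
definition circuit_partition :: "'h set \<Rightarrow> 'h set set \<Rightarrow> ('h \<Rightarrow> 'v) \<Rightarrow> ('h \<times> 'h) list set \<Rightarrow> bool" where
  "circuit_partition H Ed eps P \<longleftrightarrow> (\<forall>W\<in>P. circuit H Ed eps W) \<and>
     (\<forall>h\<in>H. \<exists>!(W, i). W \<in> P \<and> i < length W \<and> (h = fst (W ! i) \<or> h = snd (W ! i)))"

definition traversed_edges :: "('h \<times> 'h) list \<Rightarrow> 'h set set" where
  "traversed_edges W = {walk_edge W i | i. i < length W}"

text \<open>sigma(D,W)(e): traversals of e along its direction minus traversals against it.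
 Traversal of the edge {h_2,h_3} goes from h_2 to h_3; it is along the direction iff h_2 is the tail.\<close>
definition sigma :: "('h set \<Rightarrow> 'h) \<Rightarrow> ('h \<times> 'h) list \<Rightarrow> 'h set \<Rightarrow> int" where
  "sigma tail W e = (\<Sum>i<length W. if walk_edge W i = e then (if snd (W ! i) = tail e then 1 else -1) else 0)"

definition sigmaQ :: "('h set \<Rightarrow> 'h) \<Rightarrow> ('h \<times> 'h) list \<Rightarrow> 'h set \<Rightarrow> rat" where
  "sigmaQ tail W = (\<lambda>e. of_int (sigma tail W e))"

definition incidence :: "('h \<Rightarrow> 'v) \<Rightarrow> ('h set \<Rightarrow> 'h) \<Rightarrow> 'v \<Rightarrow> 'h set \<Rightarrow> rat" where
  "incidence eps tail v e =
     (if v = eps (tail e) \<and> v \<noteq> eps (head_of tail e) then 1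
      else if v = eps (head_of tail e) \<and> v \<noteq> eps (tail e) then -1 else 0)"

definition cycle_space :: "'v set \<Rightarrow> 'h set set \<Rightarrow> ('h \<Rightarrow> 'v) \<Rightarrow> ('h set \<Rightarrow> 'h) \<Rightarrow> ('h set \<Rightarrow> rat) set" where
  "cycle_space V Ed eps tail = {x. (\<forall>e. e \<notin> Ed \<longrightarrow> x e = 0) \<and>
     (\<forall>v\<in>V. (\<Sum>e\<in>Ed. incidence eps tail v e * x e) = 0)}"

definition lin_comb :: "(('b \<Rightarrow> 'a::comm_ring_1) \<Rightarrow> 'a) \<Rightarrow> ('b \<Rightarrow> 'a) set \<Rightarrow> 'b \<Rightarrow> 'a" where
  "lin_comb c S = (\<lambda>e. \<Sum>x\<in>S. c x * x e)"

definition span_of :: "('b \<Rightarrow> 'a::comm_ring_1) set \<Rightarrow> ('b \<Rightarrow> 'a) set" where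
  "span_of S = {lin_comb c T | c T. finite T \<and> T \<subseteq> S}"

definition lin_indep :: "('b \<Rightarrow> 'a::comm_ring_1) set \<Rightarrow> bool" where
  "lin_indep S \<longleftrightarrow> (\<forall>T c. finite T \<and> T \<subseteq> S \<and> lin_comb c T = (\<lambda>_. 0) \<longrightarrow> (\<forall>x\<in>T. c x = 0))"

definition cycle_basis ::
  "'v set \<Rightarrow> 'h set \<Rightarrow> 'h set set \<Rightarrow> ('h \<Rightarrow> 'v) \<Rightarrow> ('h set \<Rightarrow> 'h) \<Rightarrow> ('h \<times> 'h) list set \<Rightarrow> bool" where
  "cycle_basis V H Ed eps tail B \<longleftrightarrow> (\<forall>W\<in>B. closed_walk H Ed eps W) \<and>
     inj_on (sigma tail) B \<and> lin_indep (sigmaQ tail ` B) \<and>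
     span_of (sigmaQ tail ` B) = cycle_space V Ed eps tail"

definition cycle_spanning_set ::
  "'v set \<Rightarrow> 'h set \<Rightarrow> 'h set set \<Rightarrow> ('h \<Rightarrow> 'v) \<Rightarrow> ('h set \<Rightarrow> 'h) \<Rightarrow> ('h \<times> 'h) list set \<Rightarrow> bool" where
  "cycle_spanning_set V H Ed eps tail B \<longleftrightarrow> (\<forall>W\<in>B. closed_walk H Ed eps W) \<and>
     (\<exists>B'\<subseteq>B. cycle_basis V H Ed eps tail B')"

definition integral_cycle_spanning_set ::
  "'v set \<Rightarrow> 'h set \<Rightarrow> 'h set set \<Rightarrow> ('h \<Rightarrow> 'v) \<Rightarrow> ('h set \<Rightarrow> 'h) \<Rightarrow> ('h \<times> 'h) list set \<Rightarrow> bool" where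
  "integral_cycle_spanning_set V H Ed eps tail B \<longleftrightarrow> cycle_spanning_set V H Ed eps tail B \<and>
     (\<forall>W. closed_walk H Ed eps W \<longrightarrow> sigma tail W \<in> span_of (sigma tail ` B))"

end

theory Submission
  imports Defs
begin


section \<open>Span lemmas\<close>

lemma span_zero: "(\<lambda>_. 0) \<in> span_of S"
  unfolding span_of_def lin_comb_def
  by (rule CollectI, rule exI[of _ "\<lambda>_. 0"], rule exI[of _ "{}"]) auto

lemma span_base: "x \<in> S \<Longrightarrow> x \<in> span_of S"
  unfolding span_of_def lin_comb_def
  by (rule CollectI, rule exI[of _ "\<lambda>_. 1"], rule exI[of _ "{x}"]) auto

lemma span_add:
  assumes "x \<in> span_of S" "y \<in> span_of S"
  shows "(\<lambda>e. x e + y e) \<in> span_of S"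
proof -
  obtain c1 T1 where 1: "x = lin_comb c1 T1" "finite T1" "T1 \<subseteq> S" using assms(1) unfolding span_of_def by blast
  obtain c2 T2 where 2: "y = lin_comb c2 T2" "finite T2" "T2 \<subseteq> S" using assms(2) unfolding span_of_def by blast
  define c where "c z = (if z \<in> T1 then c1 z else 0) + (if z \<in> T2 then c2 z else 0)" for z
  have "(\<lambda>e. x e + y e) = lin_comb c (T1 \<union> T2)"
  proof
    fix e
    have "lin_comb c (T1 \<union> T2) e = (\<Sum>z\<in>T1 \<union> T2. (if z \<in> T1 then c1 z * z e else 0) + (if z \<in> T2 then c2 z * z e else 0))"
      unfolding lin_comb_def c_def by (intro sum.cong) (auto simp: distrib_right)
    also have "\<dots> = (\<Sum>z\<in>T1 \<union> T2. (if z \<in> T1 then c1 z * z e else 0)) + (\<Sum>z\<in>T1 \<union> T2. (if z \<in> T2 then c2 z * z e else 0))"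
      by (rule sum.distrib)
    also have "\<dots> = (\<Sum>z\<in>T1. c1 z * z e) + (\<Sum>z\<in>T2. c2 z * z e)"
      using 1 2 by (simp add: sum.inter_restrict[symmetric] Int_absorb1 Int_absorb2 Int_commute)
    finally show "x e + y e = lin_comb c (T1 \<union> T2) e" using 1 2 unfolding lin_comb_def by simp
  qed
  then show ?thesis using 1 2 unfolding span_of_def by blast
qed

lemma span_smult:
  assumes "x \<in> span_of S"
  shows "(\<lambda>e. a * x e) \<in> span_of S"
proof -
  obtain c1 T1 where 1: "x = lin_comb c1 T1" "finite T1" "T1 \<subseteq> S" using assms(1) unfolding span_of_def by blast
  have "(\<lambda>e. a * x e) = lin_comb (\<lambda>z. a * c1 z) T1"
    using 1 unfolding lin_comb_def by (auto simp: sum_distrib_left mult.assoc)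
  then show ?thesis using 1 unfolding span_of_def by blast
qed

lemma span_sum:
  assumes "finite A" "\<And>i. i \<in> A \<Longrightarrow> f i \<in> span_of S"
  shows "(\<lambda>e. \<Sum>i\<in>A. f i e) \<in> span_of S"
  using assms
proof (induction A rule: finite_induct)
  case empty
  then show ?case using span_zero by simp
next
  case (insert x F)
  then have "(\<lambda>e. f x e + (\<Sum>i\<in>F. f i e)) \<in> span_of S"
    by (intro span_add) auto
  then show ?case using insert by simp
qed

lemma span_mono: "S \<subseteq> T \<Longrightarrow> span_of S \<subseteq> span_of T"
  unfolding span_of_def by blast

lemma span_span:
  assumes "S \<subseteq> span_of T"
  shows "span_of S \<subseteq> span_of T"
proof
  fix x assume "x \<in> span_of S"
  then obtain c T1 where 1: "x = lin_comb c T1" "finite T1" "T1 \<subseteq> S" unfolding span_of_def by blast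
  have "(\<lambda>e. \<Sum>z\<in>T1. (\<lambda>e. c z * z e) e) \<in> span_of T"
    using 1 assms by (intro span_sum span_smult) auto
  then show "x \<in> span_of T" using 1 unfolding lin_comb_def by simp
qed

section \<open>Cycle space lemmas\<close>

lemma cs_zero: "(\<lambda>_. 0) \<in> cycle_space V Ed eps tail"
  unfolding cycle_space_def by simp

lemma cs_add:
  assumes "x \<in> cycle_space V Ed eps tail" "y \<in> cycle_space V Ed eps tail"
  shows "(\<lambda>e. x e + y e) \<in> cycle_space V Ed eps tail"
  using assms unfolding cycle_space_def by (auto simp: distrib_left sum.distrib)

lemma cs_smult:
  assumes "x \<in> cycle_space V Ed eps tail"
  shows "(\<lambda>e. a * x e) \<in> cycle_space V Ed eps tail"
proof -
  have "(\<Sum>e\<in>Ed. incidence eps tail v e * (a * x e)) = a * (\<Sum>e\<in>Ed. incidence eps tail v e * x e)" for v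
    by (simp add: sum_distrib_left mult.left_commute)
  then show ?thesis using assms unfolding cycle_space_def by auto
qed

lemma cs_diff:
  assumes "x \<in> cycle_space V Ed eps tail" "y \<in> cycle_space V Ed eps tail"
  shows "(\<lambda>e. x e - y e) \<in> cycle_space V Ed eps tail"
  using cs_add[OF assms(1) cs_smult[OF assms(2), of "-1"]] by simp

lemma cs_sum:
  assumes "finite A" "\<And>i. i \<in> A \<Longrightarrow> f i \<in> cycle_space V Ed eps tail"
  shows "(\<lambda>e. \<Sum>i\<in>A. f i e) \<in> cycle_space V Ed eps tail"
  using assms
proof (induction A rule: finite_induct)
  case empty
  then show ?case using cs_zero by simp
next
  case (insert x F)
  then have "(\<lambda>e. f x e + (\<Sum>i\<in>F. f i e)) \<in> cycle_space V Ed eps tail"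
    by (intro cs_add) auto
  then show ?case using insert by simp
qed

lemma cs_span:
  assumes "S \<subseteq> cycle_space V Ed eps tail"
  shows "span_of S \<subseteq> cycle_space V Ed eps tail"
proof
  fix x assume "x \<in> span_of S"
  then obtain c T1 where 1: "x = lin_comb c T1" "finite T1" "T1 \<subseteq> S" unfolding span_of_def by blast
  have "(\<lambda>e. \<Sum>z\<in>T1. (\<lambda>e. c z * z e) e) \<in> cycle_space V Ed eps tail"
    using 1 assms by (intro cs_sum cs_smult) auto
  then show "x \<in> cycle_space V Ed eps tail" using 1 unfolding lin_comb_def by simp
qed

lemma cs_restrict:
  assumes "y \<in> cycle_space V Ed eps tail" "\<forall>e\<in>E. y e = 0" "finite Ed"
  shows "y \<in> cycle_space V (Ed - E) eps tail"
proof -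
  have "(\<Sum>e\<in>Ed - E. incidence eps tail v e * y e) = (\<Sum>e\<in>Ed. incidence eps tail v e * y e)" for v
    using assms(2,3) by (intro sum.mono_neutral_left) auto
  then show ?thesis using assms unfolding cycle_space_def by auto
qed



lemma edge_struct:
  assumes "card e = 2" "tail e \<in> e"
  shows "head_of tail e \<in> e \<and> head_of tail e \<noteq> tail e \<and> e = {tail e, head_of tail e}"
proof -
  obtain a b where ab: "e = {a, b}" "a \<noteq> b" using assms(1) by (auto simp: card_2_iff)
  show ?thesis
  proof (cases "tail e = a")
    case True
    then have "e - {tail e} = {b}" using ab by auto
    then show ?thesis using ab True by (simp add: head_of_def)
  next
    case False
    then have t: "tail e = b" using assms(2) ab by auto
    then have "e - {tail e} = {a}" using ab by auto
    then show ?thesis using ab t by (auto simp: head_of_def)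
  qed
qed

lemma closed_walk_mono:
  "closed_walk H' Ed' eps W \<Longrightarrow> H' \<subseteq> H \<Longrightarrow> Ed' \<subseteq> Ed \<Longrightarrow> closed_walk H Ed eps W"
  unfolding closed_walk_def by blast

lemma sigma_outside:
  "closed_walk H Ed eps W \<Longrightarrow> e \<notin> Ed \<Longrightarrow> sigma tail W e = 0"
  unfolding closed_walk_def sigma_def by (intro sum.neutral) auto

lemma sigma_nz_trav:
  "sigma tail W e \<noteq> 0 \<Longrightarrow> e \<in> traversed_edges W"
proof -
  assume "sigma tail W e \<noteq> 0"
  then obtain i where "i < length W" "walk_edge W i = e"
  proof -
    assume h: "sigma tail W e \<noteq> 0" and r: "\<And>i. i < length W \<Longrightarrow> walk_edge W i = e \<Longrightarrow> thesis"
    show thesis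
    proof (rule ccontr)
      assume "\<not> thesis"
      then have "\<forall>i<length W. walk_edge W i \<noteq> e" using r by blast
      then have "sigma tail W e = 0" unfolding sigma_def by (intro sum.neutral) auto
      then show False using h by simp
    qed
  qed
  then show ?thesis unfolding traversed_edges_def by blast
qed

lemma traversed_finite: "finite (traversed_edges W)"
proof -
  have "traversed_edges W = walk_edge W ` {..<length W}"
    unfolding traversed_edges_def by auto
  then show ?thesis by simp
qed

lemma sum_rot:
  fixes g :: "nat \<Rightarrow> 'a::comm_monoid_add"
  shows "(\<Sum>i<n. g ((i+1) mod n)) = (\<Sum>i<n. g i)"
proof (cases n)
  case 0
  then show ?thesis by simp
next
  case (Suc m)
  have "(\<Sum>i<Suc m. g ((i+1) mod Suc m)) = (\<Sum>i<m. g ((i+1) mod Suc m)) + g 0"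
    by simp
  also have "(\<Sum>i<m. g ((i+1) mod Suc m)) = (\<Sum>i<m. g (Suc i))"
    by (intro sum.cong) auto
  also have "\<dots> + g 0 = (\<Sum>i<Suc m. g i)"
    by (subst sum.lessThan_Suc_shift) (simp add: add.commute)
  finally show ?thesis using Suc by simp
qed

lemma sigma_cs:
  assumes G: "is_graph V H Ed eps" and O: "orientation Ed tail" and W: "closed_walk H Ed eps W"
  shows "sigmaQ tail W \<in> cycle_space V Ed eps tail"
proof -
  let ?n = "length W"
  let ?we = "walk_edge W"
  define sg where "sg i = (if snd (W ! i) = tail (?we i) then 1 else -1 :: rat)" for i
  have finEd: "finite Ed"
    using G unfolding is_graph_def by (metis finite_UnionD)
  have cw1: "\<forall>(a, b)\<in>set W. a \<in> H \<and> b \<in> H \<and> a \<noteq> b \<and> eps a = eps b"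
    using W unfolding closed_walk_def by (rule conjunct1)
  have weEd: "?we i \<in> Ed" if "i < ?n" for i using W that unfolding closed_walk_def by blast
  have key: "incidence eps tail v (?we i) * sg i =
      (if eps (snd (W ! i)) = v then 1 else 0) - (if eps (fst (W ! ((i+1) mod ?n))) = v then 1 else 0)"
    if i: "i < ?n" for i v
  proof -
    define a where "a = snd (W ! i)"
    define b where "b = fst (W ! ((i+1) mod ?n))"
    have e: "?we i = {a, b}" unfolding walk_edge_def a_def b_def by simp
    have c2: "card {a,b} = 2" using weEd[OF i] G e unfolding is_graph_def by auto
    then have ab: "a \<noteq> b" by (metis card_2_iff doubleton_eq_iff)
    have t: "tail {a,b} \<in> {a,b}" using weEd[OF i] O e unfolding orientation_def by auto
    have sgi: "sg i = (if a = tail {a,b} then 1 else -1)" unfolding sg_def e a_def by simp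
    show ?thesis
    proof (cases "tail {a,b} = a")
      case True
      then have hd: "head_of tail {a,b} = b" using ab by (simp add: head_of_def insert_Diff_if)
      have inc: "incidence eps tail v {a,b} = (if eps a = v then 1 else 0) - (if eps b = v then 1 else 0)"
        using True hd by (auto simp: incidence_def)
      show ?thesis unfolding e sgi inc using True by (simp add: a_def b_def)
    next
      case False
      then have tb: "tail {a,b} = b" using t by auto
      then have hd: "head_of tail {a,b} = a" using ab by (simp add: head_of_def insert_Diff_if)
      have inc: "incidence eps tail v {a,b} = (if eps b = v then 1 else 0) - (if eps a = v then 1 else 0)"
        using tb hd by (auto simp: incidence_def)
      show ?thesis unfolding e sgi inc using tb ab by (simp add: a_def b_def)
    qed
  qed
  have "(\<Sum>e\<in>Ed. incidence eps tail v e * sigmaQ tail W e) = 0" for v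
  proof -
    have "(\<Sum>e\<in>Ed. incidence eps tail v e * sigmaQ tail W e)
        = (\<Sum>e\<in>Ed. \<Sum>i<?n. if ?we i = e then incidence eps tail v e * sg i else 0)"
      unfolding sigmaQ_def sigma_def of_int_sum sum_distrib_left
      by (intro sum.cong refl) (auto simp: sg_def)
    also have "\<dots> = (\<Sum>i<?n. \<Sum>e\<in>Ed. if ?we i = e then incidence eps tail v e * sg i else 0)"
      by (rule sum.swap)
    also have "\<dots> = (\<Sum>i<?n. incidence eps tail v (?we i) * sg i)"
      using finEd weEd by (intro sum.cong refl) simp
    also have "\<dots> = (\<Sum>i<?n. (if eps (snd (W ! i)) = v then 1 else 0) - (if eps (fst (W ! ((i+1) mod ?n))) = v then 1 else 0))"
      using key by (intro sum.cong) auto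
    also have "\<dots> = (\<Sum>i<?n. (if eps (snd (W ! i)) = v then 1 else 0)) - (\<Sum>i<?n. (if eps (fst (W ! ((i+1) mod ?n))) = v then 1 else 0))"
      by (rule sum_subtractf)
    also have "(\<Sum>i<?n. (if eps (fst (W ! ((i+1) mod ?n))) = v then 1 else 0)) = (\<Sum>i<?n. (if eps (fst (W ! i)) = v then 1 else (0::rat)))"
      by (rule sum_rot[where g = "\<lambda>i. if eps (fst (W ! i)) = v then 1 else 0"])
    also have "\<dots> = (\<Sum>i<?n. (if eps (snd (W ! i)) = v then 1 else 0))"
    proof (intro sum.cong refl)
      fix i assume "i \<in> {..<?n}"
      then have "W ! i \<in> set W" by simp
      then have "case W ! i of (a,b) \<Rightarrow> a \<in> H \<and> b \<in> H \<and> a \<noteq> b \<and> eps a = eps b"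
        by (rule bspec[OF cw1])
      then have "eps (fst (W ! i)) = eps (snd (W ! i))" by (simp split: prod.splits)
      then show "(if eps (fst (W ! i)) = v then 1 else 0) = (if eps (snd (W ! i)) = v then 1 else (0::rat))" by simp
    qed
    finally show ?thesis by simp
  qed
  moreover have "sigmaQ tail W e = 0" if "e \<notin> Ed" for e
    using sigma_outside[OF W that] unfolding sigmaQ_def by simp
  ultimately show ?thesis unfolding cycle_space_def by auto
qed



lemma dist_lemma:
  "distinct (concat (map (\<lambda>(a,b). [a,b]) W)) \<Longrightarrow> i < length W \<Longrightarrow> j < length W \<Longrightarrow>
    (snd (W!i) = snd (W!j) \<longrightarrow> i = j) \<and> fst (W!i) \<noteq> snd (W!j)"
proof (induction W arbitrary: i j)
  case Nil
  then show ?case by simp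
next
  case (Cons p W)
  obtain a b where p: "p = (a,b)" by (cases p)
  have setc: "set (concat (map (\<lambda>(a,b). [a,b]) W)) = fst ` set W \<union> snd ` set W"
    by (auto split: prod.splits) (force+)
  have d: "a \<noteq> b" "a \<notin> fst ` set W" "a \<notin> snd ` set W" "b \<notin> fst ` set W" "b \<notin> snd ` set W"
      "distinct (concat (map (\<lambda>(a,b). [a,b]) W))"
    using Cons.prems(1) p setc by auto
  show ?case
  proof (cases i)
    case 0
    then show ?thesis
    proof (cases j)
      case 0
      then show ?thesis using \<open>i = 0\<close> p d by simp
    next
      case (Suc j')
      then have "j' < length W" using Cons.prems by simp
      then have "W ! j' \<in> set W" by simp
      then show ?thesis using \<open>i = 0\<close> Suc p d by (force)
    qed
  next
    case (Suc i')
    then have i': "i' < length W" using Cons.prems by simp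
    then have wi: "W ! i' \<in> set W" by simp
    show ?thesis
    proof (cases j)
      case 0
      then show ?thesis using Suc p d wi by force
    next
      case (Suc j')
      then have "j' < length W" using Cons.prems by simp
      then show ?thesis using Cons.IH[OF d(6) i'] \<open>i = Suc i'\<close> Suc by simp
    qed
  qed
qed

lemma unique_index:
  assumes "circuit H Ed eps W" "i < length W" "j < length W" "walk_edge W i = walk_edge W j"
  shows "i = j"
proof -
  have dc: "distinct (concat (map (\<lambda>(a,b). [a,b]) W))" using assms(1) unfolding circuit_def by blast
  have n: "length W > 0" using assms(2) by linarith
  have "snd (W ! i) \<in> walk_edge W j" using assms(4) unfolding walk_edge_def by auto
  moreover have "snd (W ! i) \<noteq> fst (W ! ((j + 1) mod length W))"
    using dist_lemma[OF dc _ assms(2), of "(j + 1) mod length W"] n by auto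
  ultimately have "snd (W ! i) = snd (W ! j)" unfolding walk_edge_def by auto
  then show ?thesis using dist_lemma[OF dc assms(2,3)] by blast
qed

lemma sigma_circuit_trav:
  assumes "circuit H Ed eps W" "e \<in> traversed_edges W"
  shows "sigma tail W e = 1 \<or> sigma tail W e = -1"
proof -
  obtain i where i: "i < length W" "walk_edge W i = e" using assms(2) unfolding traversed_edges_def by blast
  have "sigma tail W e = (\<Sum>k<length W. if i = k then (if snd (W ! k) = tail e then 1 else -1) else 0)"
    unfolding sigma_def
  proof (intro sum.cong refl)
    fix k assume "k \<in> {..<length W}"
    then have "walk_edge W k = e \<longleftrightarrow> i = k" using unique_index[OF assms(1) i(1), of k] i by auto
    then show "(if walk_edge W k = e then if snd (W ! k) = tail e then 1 else - 1 else 0) =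
         (if i = k then if snd (W ! k) = tail e then 1 else - 1 else (0::int))" by simp
  qed
  also have "\<dots> = (if snd (W ! i) = tail e then 1 else -1)" using i by simp
  finally show ?thesis by simp
qed



lemma graph_facts:
  assumes G: "is_graph V H Ed eps"
  shows "finite Ed" "\<And>e. e \<in> Ed \<Longrightarrow> card e = 2" "\<And>e. e \<in> Ed \<Longrightarrow> e \<subseteq> H"
    "\<And>e f. e \<in> Ed \<Longrightarrow> f \<in> Ed \<Longrightarrow> e \<noteq> f \<Longrightarrow> e \<inter> f = {}"
    "\<And>h. h \<in> H \<Longrightarrow> eps h \<in> V" "finite H"
  using G unfolding is_graph_def by (auto intro: finite_UnionD)

lemma find_cycle:
  fixes u :: "'h set \<Rightarrow> int"
  assumes G: "is_graph V H Ed eps" and O: "orientation Ed tail"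
    and cs: "(\<lambda>e. (of_int (u e) :: rat)) \<in> cycle_space V Ed eps tail"
    and e0: "e0 \<in> Ed" "u e0 \<noteq> 0"
  shows "\<exists>C. closed_walk H Ed eps C \<and> (\<forall>e. sigma tail C e \<noteq> 0 \<longrightarrow> e \<in> Ed \<and> sigma tail C e = sgn (u e))
     \<and> (\<exists>e. sigma tail C e \<noteq> 0)"
proof -
  note gf = graph_facts[OF G]
  define out where "out e = (if u e > 0 then tail e else head_of tail e)" for e
  define inn where "inn e = (if u e > 0 then head_of tail e else tail e)" for e
  define S where "S = {e\<in>Ed. u e \<noteq> 0}"
  have finS: "finite S" using gf(1) unfolding S_def by simp
  have SEd: "S \<subseteq> Ed" unfolding S_def by auto
  have est: "head_of tail e \<in> e \<and> head_of tail e \<noteq> tail e \<and> e = {tail e, head_of tail e} \<and> tail e \<in> e"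
    if "e \<in> Ed" for e
    using edge_struct[OF gf(2)[OF that]] O that unfolding orientation_def by auto
  have es: "out e \<in> e \<and> inn e \<in> e \<and> out e \<noteq> inn e \<and> {out e, inn e} = e" if "e \<in> Ed" for e
    using est[OF that] unfolding out_def inn_def by auto
  have outtail: "out e = tail e \<longleftrightarrow> u e > 0" if "e \<in> S" for e
    using est[of e] that unfolding out_def S_def by auto
  have succ: "\<exists>f\<in>S. eps (out f) = eps (inn e)" if eS: "e \<in> S" for e
  proof (cases "eps (out e) = eps (inn e)")
    case True
    then show ?thesis using eS by blast
  next
    case False
    define w where "w = eps (inn e)"
    have eEd: "e \<in> Ed" using eS SEd by auto
    have wV: "w \<in> V" unfolding w_def using es[OF eEd] gf(3)[OF eEd] gf(5) by auto
    show ?thesis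
    proof (rule ccontr)
      assume nf: "\<not> ?thesis"
      have le: "incidence eps tail w f * of_int (u f) \<le> 0" if fEd: "f \<in> Ed" for f
      proof (cases "u f = 0")
        case True
        then show ?thesis by simp
      next
        case False
        then have "f \<in> S" using fEd S_def by auto
        then have no: "eps (out f) \<noteq> w" using nf w_def by blast
        show ?thesis
        proof (cases "u f > 0")
          case True
          then have "eps (tail f) \<noteq> w" using no unfolding out_def by simp
          then have "incidence eps tail w f \<le> 0" unfolding incidence_def by auto
          then show ?thesis using True by (simp add: mult_nonpos_nonneg)
        next
          case False
          then have neg: "u f < 0" using \<open>u f \<noteq> 0\<close> by simp
          then have "eps (head_of tail f) \<noteq> w" using no unfolding out_def by simp
          then have "incidence eps tail w f \<ge> 0" unfolding incidence_def by auto
          then show ?thesis using neg by (simp add: mult_nonneg_nonpos)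
        qed
      qed
      have lt: "incidence eps tail w e * of_int (u e) < 0"
      proof (cases "u e > 0")
        case True
        then have "out e = tail e" "inn e = head_of tail e" unfolding out_def inn_def by auto
        then have "incidence eps tail w e = -1" using False unfolding w_def incidence_def by auto
        then show ?thesis using True by simp
      next
        case False
        then have neg: "u e < 0" using eS S_def by auto
        then have "out e = head_of tail e" "inn e = tail e" unfolding out_def inn_def by auto
        then have "incidence eps tail w e = 1" using \<open>eps (out e) \<noteq> eps (inn e)\<close> unfolding w_def incidence_def by auto
        then show ?thesis using neg by simp
      qed
      have "(\<Sum>f\<in>Ed. incidence eps tail w f * of_int (u f)) < (\<Sum>f\<in>Ed. 0)"
        by (rule sum_strict_mono_ex1) (use gf(1) le lt eEd in auto)
      moreover have "(\<Sum>f\<in>Ed. incidence eps tail w f * of_int (u f)) = 0"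
        using cs wV unfolding cycle_space_def by auto
      ultimately show False by simp
    qed
  qed
  then have "\<forall>e\<in>S. \<exists>f. f \<in> S \<and> eps (out f) = eps (inn e)" by blast
  from bchoice[OF this] obtain sc where sc0: "\<forall>e\<in>S. sc e \<in> S \<and> eps (out (sc e)) = eps (inn e)"
    by blast
  have sc: "sc e \<in> S \<and> eps (out (sc e)) = eps (inn e)" if "e \<in> S" for e using sc0 that by blast
  define d where "d k = (sc ^^ k) e0" for k
  have e0S: "e0 \<in> S" using e0 S_def by auto
  have dS: "d k \<in> S" for k
    by (induction k) (simp_all add: d_def e0S sc)
  have dsuc: "d (Suc k) = sc (d k)" for k by (simp add: d_def)
  have "\<not> inj_on d {..card S}"
  proof
    assume "inj_on d {..card S}"
    then have "card (d ` {..card S}) = Suc (card S)" by (simp add: card_image)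
    moreover have "d ` {..card S} \<subseteq> S" using dS by auto
    then have "card (d ` {..card S}) \<le> card S" by (rule card_mono[OF finS])
    ultimately show False by simp
  qed
  then obtain i0 j0 where ij0: "i0 \<noteq> j0" "d i0 = d j0" unfolding inj_on_def by blast
  have ex: "\<exists>j. \<exists>i<j. d i = d j"
  proof (cases "i0 < j0")
    case True
    then show ?thesis using ij0 by blast
  next
    case False
    then have "j0 < i0" using ij0 by simp
    then show ?thesis using ij0 by (intro exI[of _ i0] exI[of _ j0]) auto
  qed
  define j where "j = (LEAST j. \<exists>i<j. d i = d j)"
  have "\<exists>i<j. d i = d j" unfolding j_def by (rule LeastI_ex[OF ex])
  then obtain i where ij: "i < j" "d i = d j" by blast
  have mindist: "d a \<noteq> d b" if "a < b" "b < j" for a b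
  proof
    assume "d a = d b"
    then have "j \<le> b" unfolding j_def using that(1) by (intro Least_le) blast
    then show False using that by simp
  qed
  define n where "n = j - i"
  define c where "c k = d (i + k)" for k
  have n0: "n > 0" using ij n_def by simp
  have cn: "c n = c 0" using ij unfolding c_def n_def by simp
  have csuc: "c (Suc k) = sc (c k)" for k unfolding c_def using dsuc by simp
  have cS: "c k \<in> S" for k unfolding c_def using dS by simp
  have cEd: "c k \<in> Ed" for k using cS SEd by auto
  have cdist: "c a \<noteq> c b" if "a < b" "b < n" for a b
    unfolding c_def using mindist[of "i + a" "i + b"] that n_def by simp
  define C where "C = map (\<lambda>k. (inn (c k), out (c (Suc k)))) [0..<n]"
  have lenC: "length C = n" unfolding C_def by simp
  have Cnth: "C ! k = (inn (c k), out (c (Suc k)))" if "k < n" for k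
    unfolding C_def using that by simp
  have we: "walk_edge C k = c (Suc k)" if k: "k < n" for k
  proof (cases "Suc k < n")
    case True
    then have "walk_edge C k = {out (c (Suc k)), inn (c (Suc k))}"
      unfolding walk_edge_def lenC using Cnth k by simp
    then show ?thesis using es[OF cEd] by simp
  next
    case False
    then have sk: "Suc k = n" using k by simp
    then have "(k + 1) mod n = 0" by simp
    then have "walk_edge C k = {out (c n), inn (c 0)}"
      unfolding walk_edge_def lenC using Cnth k n0 sk by simp
    then show ?thesis using es[OF cEd] cn sk by simp
  qed
  have cw: "closed_walk H Ed eps C"
    unfolding closed_walk_def
  proof (intro conjI ballI allI impI)
    fix x assume "x \<in> set C"
    then obtain k where k: "k < n" "x = (inn (c k), out (c (Suc k)))"
      unfolding C_def by auto
    have 1: "inn (c k) \<in> H" using es[OF cEd] gf(3)[OF cEd] by blast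
    have 2: "out (c (Suc k)) \<in> H" using es[OF cEd] gf(3)[OF cEd] by blast
    have 3: "inn (c k) \<noteq> out (c (Suc k))"
    proof (cases "c k = c (Suc k)")
      case True
      then show ?thesis using es[OF cEd, of k] by metis
    next
      case False
      then have "c k \<inter> c (Suc k) = {}" using gf(4) cEd by blast
      then show ?thesis using es[OF cEd, of k] es[OF cEd, of "Suc k"] by blast
    qed
    have 4: "eps (inn (c k)) = eps (out (c (Suc k)))" using sc[OF cS[of k]] csuc by simp
    show "case x of (a, b) \<Rightarrow> a \<in> H \<and> b \<in> H \<and> a \<noteq> b \<and> eps a = eps b"
      using 1 2 3 4 k by simp
  next
    fix k assume "k < length C"
    then show "walk_edge C k \<in> Ed" using we cEd lenC by simp
  qed
  have inj: "k1 = k2" if "k1 < n" "k2 < n" "c (Suc k1) = c (Suc k2)" for k1 k2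
  proof -
    have "False" if "a < b" "b < n" "c (Suc a) = c (Suc b)" for a b
    proof (cases "Suc b < n")
      case True
      then show ?thesis using cdist[of "Suc a" "Suc b"] that by simp
    next
      case False
      then have "Suc b = n" using that by simp
      then have "c (Suc a) = c 0" using that cn by simp
      moreover have "Suc a < n" using that by simp
      ultimately show ?thesis using cdist[of 0 "Suc a"] by simp
    qed
    then show ?thesis using that by (metis linorder_neqE_nat)
  qed
  have sig: "sigma tail C e = (if \<exists>k<n. c (Suc k) = e then sgn (u e) else 0)" for e
  proof (cases "\<exists>k<n. c (Suc k) = e")
    case True
    then obtain k0 where k0: "k0 < n" "c (Suc k0) = e" by blast
    have "sigma tail C e = (\<Sum>k<n. if k0 = k then (if out (c (Suc k)) = tail e then 1 else -1) else 0)"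
      unfolding sigma_def lenC
    proof (intro sum.cong refl)
      fix k assume "k \<in> {..<n}"
      then have kn: "k < n" by simp
      have "walk_edge C k = e \<longleftrightarrow> k0 = k" using we[OF kn] inj[OF kn k0(1)] k0 by auto
      then show "(if walk_edge C k = e then if snd (C ! k) = tail e then 1 else - 1 else 0) =
          (if k0 = k then if out (c (Suc k)) = tail e then 1 else - 1 else (0::int))"
        using Cnth[OF kn] by simp
    qed
    also have "\<dots> = (if out e = tail e then 1 else -1)" using k0 by simp
    also have "\<dots> = sgn (u e)" using outtail[of e] cS[of "Suc k0"] k0 unfolding S_def
      by (auto simp: sgn_if)
    finally show ?thesis using True by simp
  next
    case False
    have "sigma tail C e = 0" unfolding sigma_def lenC
      using we False by (intro sum.neutral) auto
    then show ?thesis using False by auto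
  qed
  show ?thesis
  proof (intro exI conjI allI impI)
    show "closed_walk H Ed eps C" by (rule cw)
  next
    fix e assume "sigma tail C e \<noteq> 0"
    then have "\<exists>k<n. c (Suc k) = e" using sig[of e] by (auto split: if_splits)
    then obtain k where "k < n" "c (Suc k) = e" by blast
    then show "e \<in> Ed" "sigma tail C e = sgn (u e)" using cEd sig[of e] by auto
  next
    have "sigma tail C (c 1) = sgn (u (c 1))" using sig[of "c 1"] n0 by auto
    moreover have "u (c 1) \<noteq> 0" using cS[of 1] S_def by auto
    ultimately show "sigma tail C (c 1) \<noteq> 0" by (simp add: sgn_if)
  qed
qed

lemma decomp:
  fixes u :: "'h set \<Rightarrow> int"
  assumes G: "is_graph V H Ed eps" and O: "orientation Ed tail"
  shows "(\<lambda>e. (of_int (u e) :: rat)) \<in> cycle_space V Ed eps tail \<Longrightarrow>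
     u \<in> span_of (sigma tail ` {W. closed_walk H Ed eps W})"
proof (induction "\<Sum>e\<in>Ed. nat \<bar>u e\<bar>" arbitrary: u rule: less_induct)
  case less
  note gf = graph_facts[OF G]
  have out0: "u e = 0" if "e \<notin> Ed" for e
    using less.prems that unfolding cycle_space_def by auto
  show ?case
  proof (cases "\<forall>e\<in>Ed. u e = 0")
    case True
    then have "u = (\<lambda>_. 0)" using out0 by auto
    then show ?thesis using span_zero by simp
  next
    case False
    then obtain e0 where e0: "e0 \<in> Ed" "u e0 \<noteq> 0" by blast
    obtain C where C: "closed_walk H Ed eps C"
      and sg: "\<forall>e. sigma tail C e \<noteq> 0 \<longrightarrow> e \<in> Ed \<and> sigma tail C e = sgn (u e)"
      and ex: "\<exists>e. sigma tail C e \<noteq> 0"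
      using find_cycle[OF G O less.prems e0] by blast
    define u' where "u' e = u e - sigma tail C e" for e
    have "(\<lambda>e. (of_int (u' e) :: rat)) = (\<lambda>e. of_int (u e) - sigmaQ tail C e)"
      unfolding u'_def sigmaQ_def by simp
    then have cs': "(\<lambda>e. (of_int (u' e) :: rat)) \<in> cycle_space V Ed eps tail"
      using cs_diff[OF less.prems sigma_cs[OF G O C]] by simp
    have le: "nat \<bar>u' e\<bar> \<le> nat \<bar>u e\<bar>" for e
    proof (cases "sigma tail C e = 0")
      case True
      then show ?thesis unfolding u'_def by simp
    next
      case False
      then have s1: "sigma tail C e = sgn (u e)" using sg by blast
      then have "u e \<noteq> 0" using False by auto
      then show ?thesis using s1 unfolding u'_def by (auto simp: sgn_if)
    qed
    obtain e1 where e1: "sigma tail C e1 \<noteq> 0" using ex by blast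
    have e1a: "e1 \<in> Ed" "sigma tail C e1 = sgn (u e1)" using sg e1 by blast+
    then have e1': "e1 \<in> Ed" "sigma tail C e1 = sgn (u e1)" "u e1 \<noteq> 0" using e1 by auto
    then have lt: "nat \<bar>u' e1\<bar> < nat \<bar>u e1\<bar>" unfolding u'_def by (auto simp: sgn_if)
    have lts: "(\<Sum>e\<in>Ed. nat \<bar>u' e\<bar>) < (\<Sum>e\<in>Ed. nat \<bar>u e\<bar>)"
      by (rule sum_strict_mono_ex1) (use gf(1) le lt e1' in auto)
    have "u' \<in> span_of (sigma tail ` {W. closed_walk H Ed eps W})"
      by (rule less.hyps[OF lts cs'])
    moreover have "sigma tail C \<in> span_of (sigma tail ` {W. closed_walk H Ed eps W})"
      using C by (intro span_base) auto
    ultimately have "(\<lambda>e. u' e + sigma tail C e) \<in> span_of (sigma tail ` {W. closed_walk H Ed eps W})"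
      by (rule span_add)
    moreover have "(\<lambda>e. u' e + sigma tail C e) = u" unfolding u'_def by simp
    ultimately show ?thesis by simp
  qed
qed



lemma kill:
  fixes x :: "'b \<Rightarrow> 'a::comm_ring_1" and g :: "'b \<Rightarrow> 'b \<Rightarrow> int"
  assumes "finite E" "\<And>e e'. e \<in> E \<Longrightarrow> e' \<in> E \<Longrightarrow> e \<noteq> e' \<Longrightarrow> g e e' = 0"
    "\<And>e. e \<in> E \<Longrightarrow> g e e * g e e = 1" "e' \<in> E"
  shows "x e' - (\<Sum>e\<in>E. x e * of_int (g e e) * of_int (g e e')) = 0"
proof -
  have "(\<Sum>e\<in>E. x e * of_int (g e e) * of_int (g e e')) =
      x e' * of_int (g e' e') * of_int (g e' e') + (\<Sum>e\<in>E - {e'}. x e * of_int (g e e) * of_int (g e e'))"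
    by (rule sum.remove[OF assms(1,4)])
  also have "(\<Sum>e\<in>E - {e'}. x e * of_int (g e e) * of_int (g e e')) = 0"
    using assms(2,4) by (intro sum.neutral) auto
  also have "x e' * of_int (g e' e') * of_int (g e' e') = x e' * of_int (g e' e' * g e' e')"
    by (simp add: mult.assoc)
  also have "\<dots> = x e'" using assms(3)[OF assms(4)] by simp
  finally show ?thesis by simp
qed

theorem mainTheorem6:
  fixes V :: "'v set" and H :: "'h set" and Ed :: "'h set set" and eps :: "'h \<Rightarrow> 'v"
    and tail :: "'h set \<Rightarrow> 'h" and P \<Gamma> :: "('h \<times> 'h) list set" and E :: "'h set set"
  assumes "is_graph V H Ed eps"
    and "four_regular V H eps"
    and "orientation Ed tail"
    and "circuit_partition H Ed eps P"
    and "E \<subseteq> Ed"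
    and "\<forall>W\<in>P. card (traversed_edges W \<inter> E) \<le> 1"
    and "cycle_spanning_set V (del_H H E) (Ed - E) eps tail \<Gamma>"
  shows "cycle_spanning_set V H Ed eps tail (\<Gamma> \<union> P) \<and>
         (integral_cycle_spanning_set V (del_H H E) (Ed - E) eps tail \<Gamma> \<longrightarrow>
          integral_cycle_spanning_set V H Ed eps tail (\<Gamma> \<union> P))"
proof -
  note G = assms(1) and O = assms(3)
  note gf = graph_facts[OF G]
  define H' where "H' = del_H H E"
  define Ed' where "Ed' = Ed - E"
  have finE: "finite E" using gf(1) assms(5) finite_subset by blast
  have G': "is_graph V H' Ed' eps"
    unfolding is_graph_def H'_def Ed'_def del_H_def
  proof (intro conjI ballI)
    show "finite V" using G unfolding is_graph_def by blast
    show "finite (H - \<Union>E)" using gf(6) by simp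
    show "eps ` (H - \<Union>E) \<subseteq> V" using gf(5) by auto
  next
    fix e assume e: "e \<in> Ed - E"
    show "card e = 2" using gf(2) e by auto
    have "e \<inter> f = {}" if "f \<in> E" for f using gf(4)[of e f] e that assms(5) by auto
    then show "e \<subseteq> H - \<Union>E" using gf(3) e by auto
  next
    show "\<Union>(Ed - E) = H - \<Union>E"
    proof
      show "\<Union>(Ed - E) \<subseteq> H - \<Union>E"
      proof
        fix h assume "h \<in> \<Union>(Ed - E)"
        then obtain e where e: "e \<in> Ed - E" "h \<in> e" by blast
        have "h \<notin> f" if "f \<in> E" for f using gf(4)[of e f] e that assms(5) by auto
        then show "h \<in> H - \<Union>E" using gf(3) e by auto
      qed
      show "H - \<Union>E \<subseteq> \<Union>(Ed - E)"
      proof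
        fix h assume h: "h \<in> H - \<Union>E"
        have "\<Union>Ed = H" using G unfolding is_graph_def by blast
        then obtain e where "e \<in> Ed" "h \<in> e" using h by blast
        then show "h \<in> \<Union>(Ed - E)" using h by blast
      qed
    qed
  next
    fix e e' assume "e \<in> Ed - E" "e' \<in> Ed - E"
    then show "e \<noteq> e' \<longrightarrow> e \<inter> e' = {}" using gf(4) by blast
  qed
  have O': "orientation Ed' tail" using O unfolding orientation_def Ed'_def by blast
  have H'H: "H' \<subseteq> H" unfolding H'_def del_H_def by blast
  have Ed'Ed: "Ed' \<subseteq> Ed" unfolding Ed'_def by blast
  have Gcw: "\<forall>W\<in>\<Gamma>. closed_walk H' Ed' eps W"
    using assms(7) unfolding cycle_spanning_set_def H'_def Ed'_def by blast
  obtain B0 where B0: "B0 \<subseteq> \<Gamma>" "cycle_basis V H' Ed' eps tail B0"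
    using assms(7) unfolding cycle_spanning_set_def H'_def Ed'_def by blast
  have Gcw': "closed_walk H Ed eps W" if "W \<in> \<Gamma>" for W
    using closed_walk_mono[OF bspec[OF Gcw that] H'H Ed'Ed] .
  have Pc: "circuit H Ed eps W" if "W \<in> P" for W
    using assms(4) that unfolding circuit_partition_def by blast
  have Pcw: "closed_walk H Ed eps W" if "W \<in> P" for W
    using Pc[OF that] unfolding circuit_def by blast
  have Gzero: "sigma tail W e = 0" if "W \<in> \<Gamma>" "e \<in> E" for W e
    using sigma_outside[OF bspec[OF Gcw that(1)]] that(2) unfolding Ed'_def by blast
  have part: "\<forall>h\<in>H. \<exists>!(W, i). W \<in> P \<and> i < length W \<and> (h = fst (W ! i) \<or> h = snd (W ! i))"
    using assms(4) unfolding circuit_partition_def by blast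
  have uniq: "W1 = W2" if a: "W1 \<in> P" "W2 \<in> P" "e \<in> traversed_edges W1" "e \<in> traversed_edges W2" for W1 W2 e
  proof -
    obtain i where i: "i < length W1" "walk_edge W1 i = e" using a(3) unfolding traversed_edges_def by blast
    obtain j where j: "j < length W2" "walk_edge W2 j = e" using a(4) unfolding traversed_edges_def by blast
    define h where "h = snd (W1 ! i)"
    have "h \<in> e" using i unfolding h_def walk_edge_def by auto
    moreover have "e \<in> Ed" using Pcw[OF a(1)] i unfolding closed_walk_def by blast
    ultimately have hH: "h \<in> H" using gf(3) by blast
    have n2: "length W2 > 0" using j by linarith
    have "h = snd (W2 ! j) \<or> h = fst (W2 ! ((j + 1) mod length W2))"
      using \<open>h \<in> e\<close> j unfolding walk_edge_def by auto
    then obtain j' where j': "j' < length W2" "h = fst (W2 ! j') \<or> h = snd (W2 ! j')"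
      using j n2 by (metis mod_less_divisor)
    have u: "\<exists>!(W, i). W \<in> P \<and> i < length W \<and> (h = fst (W ! i) \<or> h = snd (W ! i))"
      using part hH by blast
    obtain x where x: "\<forall>y. (case y of (W, i) \<Rightarrow> W \<in> P \<and> i < length W \<and> (h = fst (W ! i) \<or> h = snd (W ! i))) \<longrightarrow> y = x"
      using u unfolding Ex1_def by blast
    have "(W1, i) = x" using x a(1) i(1) h_def by auto
    moreover have "(W2, j') = x" using x a(2) j' by auto
    ultimately have "(W1, i) = (W2, j')" by simp
    then show ?thesis by simp
  qed
  have exist: "\<exists>W\<in>P. e \<in> traversed_edges W" if eE: "e \<in> E" for e
  proof -
    have eEd: "e \<in> Ed" using eE assms(5) by blast
    then obtain h where he: "h \<in> e" using gf(2)[OF eEd] by (metis card.empty ex_in_conv zero_neq_numeral)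
    have hH: "h \<in> H" using he gf(3)[OF eEd] by blast
    obtain W i where Wi: "W \<in> P" "i < length W" "h = fst (W ! i) \<or> h = snd (W ! i)"
      using part hH by blast
    define n where "n = length W"
    have n0: "n > 0" using Wi n_def by linarith
    define k where "k = (if h = snd (W ! i) then i else if i = 0 then n - 1 else i - 1)"
    have k: "k < n" using Wi n0 unfolding k_def n_def by auto
    have "h \<in> walk_edge W k"
    proof (cases "h = snd (W ! i)")
      case True
      then show ?thesis unfolding k_def walk_edge_def by simp
    next
      case False
      then have hf: "h = fst (W ! i)" using Wi by blast
      have "(k + 1) mod n = i"
      proof (cases "i = 0")
        case True
        then show ?thesis using False n0 unfolding k_def by simp
      next
        case f2: False
        then show ?thesis using False Wi(2) unfolding k_def n_def by simp
      qed
      then show ?thesis using hf unfolding walk_edge_def n_def by simp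
    qed
    moreover have "walk_edge W k \<in> Ed" using Pcw[OF Wi(1)] k unfolding closed_walk_def n_def by blast
    ultimately have "walk_edge W k = e" using gf(4)[OF _ eEd] he by blast
    then show ?thesis using Wi(1) k unfolding traversed_edges_def n_def by blast
  qed
  have one: "e = e'" if "W \<in> P" "e \<in> E" "e' \<in> E" "e \<in> traversed_edges W" "e' \<in> traversed_edges W" for W e e'
  proof -
    have "card (traversed_edges W \<inter> E) \<le> Suc 0" using assms(6) that(1) by simp
    then show ?thesis using that traversed_finite[of W] card_le_Suc0_iff_eq[of "traversed_edges W \<inter> E"] by blast
  qed
  define We where "We e = (SOME W. W \<in> P \<and> e \<in> traversed_edges W)" for e
  have We: "We e \<in> P \<and> e \<in> traversed_edges (We e)" if "e \<in> E" for e
    unfolding We_def using exist[OF that] by (metis (mono_tags, lifting) someI_ex)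
  define s where "s e = sigma tail (We e) e" for e
  have s1: "s e * s e = 1" if "e \<in> E" for e
    using sigma_circuit_trav[OF Pc[of "We e"], of e tail] We[OF that] unfolding s_def by auto
  have snz: "s e \<noteq> 0" if "e \<in> E" for e using s1[OF that] by auto
  have off: "sigma tail (We e) e' = 0" if "e \<in> E" "e' \<in> E" "e \<noteq> e'" for e e'
    using sigma_nz_trav[of tail "We e" e'] one[of "We e" e e'] We[OF that(1)] that by blast
  have Ptrav0: "sigma tail W e = 0" if "W \<in> P" "e \<in> E" "W \<noteq> We e" for W e
    using sigma_nz_trav[of tail W e] uniq[of W "We e" e] We[OF that(2)] that by blast
  define PE where "PE = {W\<in>P. traversed_edges W \<inter> E \<noteq> {}}"
  have PE_We: "\<exists>e\<in>E. W = We e" if a: "W \<in> PE" for W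
  proof -
    obtain e where e: "e \<in> E" "e \<in> traversed_edges W" "W \<in> P" using a PE_def by blast
    then have "W = We e" using uniq[of W "We e" e] We[OF e(1)] by blast
    then show ?thesis using e by blast
  qed
  have We_PE: "We e \<in> PE" if "e \<in> E" for e using We[OF that] that unfolding PE_def by blast
  have PEP: "PE \<subseteq> P" unfolding PE_def by blast
  define B' where "B' = B0 \<union> PE"
  have B0G: "\<And>W. W \<in> B0 \<Longrightarrow> W \<in> \<Gamma>" using B0(1) by blast
  have B0basis: "inj_on (sigma tail) B0" "lin_indep (sigmaQ tail ` B0)"
    "span_of (sigmaQ tail ` B0) = cycle_space V Ed' eps tail"
    using B0(2) unfolding cycle_basis_def by blast+
  have B'cw: "closed_walk H Ed eps W" if "W \<in> B'" for W
    using that Gcw' Pcw B0G PEP unfolding B'_def by blast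
  have sigmaQ_eq: "sigmaQ tail W e = of_int (sigma tail W e)" for W e unfolding sigmaQ_def by simp

  have PEcase: "W1 = W2" if a: "W1 \<in> PE" "W2 \<in> B'" "sigma tail W1 = sigma tail W2" for W1 W2
  proof -
    obtain e where e: "e \<in> E" "W1 = We e" using PE_We[OF a(1)] by blast
    have "sigma tail W2 e \<noteq> 0" using a(3) snz[OF e(1)] e unfolding s_def by metis
    then have "W2 \<notin> B0" using Gzero B0G e(1) by blast
    then have "W2 \<in> P" using a(2) PEP unfolding B'_def by blast
    then have "W2 = We e" using Ptrav0 \<open>sigma tail W2 e \<noteq> 0\<close> e(1) by blast
    then show ?thesis using e by simp
  qed
  have inj: "inj_on (sigma tail) B'"
  proof (rule inj_onI)
    fix W1 W2 assume W: "W1 \<in> B'" "W2 \<in> B'" "sigma tail W1 = sigma tail W2"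
    show "W1 = W2"
    proof (cases "W1 \<in> PE")
      case True
      then show ?thesis using PEcase W by blast
    next
      case False
      show ?thesis
      proof (cases "W2 \<in> PE")
        case True
        then show ?thesis using PEcase[of W2 W1] W by simp
      next
        case f2: False
        then show ?thesis using False W B0basis(1) unfolding B'_def inj_on_def by blast
      qed
    qed
  qed
  have indep: "lin_indep (sigmaQ tail ` B')"
    unfolding lin_indep_def
  proof (intro allI impI ballI)
    fix T c x
    assume Tc: "finite T \<and> T \<subseteq> sigmaQ tail ` B' \<and> lin_comb c T = (\<lambda>_. 0)" and xT: "x \<in> T"
    have fT: "finite T" and TB: "T \<subseteq> sigmaQ tail ` B'" and lc: "lin_comb c T = (\<lambda>_. 0)" using Tc by auto
    have cPE: "c y = 0" if yT: "y \<in> T" and yPE: "y \<in> sigmaQ tail ` PE" for y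
    proof -
      obtain W where W: "W \<in> PE" "y = sigmaQ tail W" using yPE by blast
      obtain e where e: "e \<in> E" "W = We e" using PE_We[OF W(1)] by blast
      have "0 = lin_comb c T e" using lc by simp
      also have "\<dots> = c y * y e + (\<Sum>z\<in>T - {y}. c z * z e)"
        unfolding lin_comb_def by (rule sum.remove[OF fT yT])
      also have "(\<Sum>z\<in>T - {y}. c z * z e) = 0"
      proof (intro sum.neutral ballI)
        fix z assume z: "z \<in> T - {y}"
        then obtain W' where W': "W' \<in> B'" "z = sigmaQ tail W'" using TB by blast
        have "sigma tail W' e = 0"
        proof (cases "W' \<in> B0")
          case True
          then show ?thesis using Gzero B0G e(1) by blast
        next
          case False
          then have "W' \<in> P" using W'(1) PEP unfolding B'_def by blast
          moreover have "W' \<noteq> We e" using z W W' e by blast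
          ultimately show ?thesis using Ptrav0 e(1) by blast
        qed
        then show "c z * z e = 0" using W' sigmaQ_eq by simp
      qed
      finally have "c y * y e = 0" by simp
      moreover have "y e = of_int (s e)" using W e sigmaQ_eq unfolding s_def by simp
      ultimately show ?thesis using snz[OF e(1)] by simp
    qed
    define T1 where "T1 = T \<inter> sigmaQ tail ` B0"
    have "lin_comb c T1 = lin_comb c T"
    proof
      fix e
      show "lin_comb c T1 e = lin_comb c T e"
        unfolding lin_comb_def
      proof (rule sum.mono_neutral_left[OF fT])
        show "T1 \<subseteq> T" unfolding T1_def by blast
        show "\<forall>i\<in>T - T1. c i * i e = 0"
        proof
          fix y assume y: "y \<in> T - T1"
          then have "y \<in> sigmaQ tail ` B0 \<union> sigmaQ tail ` PE" "y \<notin> sigmaQ tail ` B0"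
            using TB unfolding T1_def B'_def by auto
          then have "y \<in> sigmaQ tail ` PE" by simp
          then show "c y * y e = 0" using cPE y by simp
        qed
      qed
    qed
    then have "lin_comb c T1 = (\<lambda>_. 0)" using lc by simp
    moreover have "finite T1" "T1 \<subseteq> sigmaQ tail ` B0" unfolding T1_def using fT by auto
    ultimately have "finite T1 \<and> T1 \<subseteq> sigmaQ tail ` B0 \<and> lin_comb c T1 = (\<lambda>_. 0)" by simp
    note c0 = B0basis(2)[unfolded lin_indep_def, rule_format, OF this]
    have "x \<in> sigmaQ tail ` B0 \<or> x \<in> sigmaQ tail ` PE" using xT TB unfolding B'_def by auto
    then show "c x = 0"
    proof
      assume "x \<in> sigmaQ tail ` B0"
      then have "x \<in> T1" using xT unfolding T1_def by simp
      then show ?thesis by (rule c0)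
    next
      assume "x \<in> sigmaQ tail ` PE"
      then show ?thesis using cPE xT by simp
    qed
  qed
  have spanB': "span_of (sigmaQ tail ` B') = cycle_space V Ed eps tail"
  proof
    show "span_of (sigmaQ tail ` B') \<subseteq> cycle_space V Ed eps tail"
      using sigma_cs[OF G O B'cw] by (intro cs_span) blast
  next
    show "cycle_space V Ed eps tail \<subseteq> span_of (sigmaQ tail ` B')"
    proof
      fix x assume x: "x \<in> cycle_space V Ed eps tail"
      define f where "f e = (\<lambda>e'. x e * of_int (s e) * sigmaQ tail (We e) e')" for e
      define y where "y e' = x e' - (\<Sum>e\<in>E. f e e')" for e'
      have fcs: "f e \<in> cycle_space V Ed eps tail" if "e \<in> E" for e
        unfolding f_def using sigma_cs[OF G O Pcw[OF We[OF that, THEN conjunct1]]]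
        by (rule cs_smult)
      have ycs: "y \<in> cycle_space V Ed eps tail"
        unfolding y_def using cs_diff[OF x cs_sum[OF finE fcs]] by simp
      have y0: "\<forall>e\<in>E. y e = 0"
      proof
        fix e' assume e': "e' \<in> E"
        have "y e' = x e' - (\<Sum>e\<in>E. x e * of_int (sigma tail (We e) e) * of_int (sigma tail (We e) e'))"
          unfolding y_def f_def s_def sigmaQ_eq by simp
        also have "\<dots> = 0"
          by (rule kill[OF finE _ _ e']) (use off s1 in \<open>auto simp: s_def\<close>)
        finally show "y e' = 0" .
      qed
      have "y \<in> cycle_space V Ed' eps tail" unfolding Ed'_def by (rule cs_restrict[OF ycs y0 gf(1)])
      then have "y \<in> span_of (sigmaQ tail ` B')"
        using B0basis(3) span_mono[of "sigmaQ tail ` B0" "sigmaQ tail ` B'"] unfolding B'_def by blast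
      moreover have "(\<lambda>e'. \<Sum>e\<in>E. f e e') \<in> span_of (sigmaQ tail ` B')"
      proof (rule span_sum[OF finE])
        fix e assume e: "e \<in> E"
        have "sigmaQ tail (We e) \<in> span_of (sigmaQ tail ` B')"
          using We_PE[OF e] unfolding B'_def by (intro span_base) blast
        then show "f e \<in> span_of (sigmaQ tail ` B')" unfolding f_def by (rule span_smult)
      qed
      ultimately have "(\<lambda>e'. y e' + (\<Sum>e\<in>E. f e e')) \<in> span_of (sigmaQ tail ` B')"
        by (rule span_add)
      moreover have "(\<lambda>e'. y e' + (\<Sum>e\<in>E. f e e')) = x" unfolding y_def by simp
      ultimately show "x \<in> span_of (sigmaQ tail ` B')" by simp
    qed
  qed
  have cs1: "cycle_spanning_set V H Ed eps tail (\<Gamma> \<union> P)"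
    unfolding cycle_spanning_set_def
  proof (intro conjI ballI exI[of _ B'])
    fix W assume "W \<in> \<Gamma> \<union> P" then show "closed_walk H Ed eps W" using Gcw' Pcw by blast
  next
    show "B' \<subseteq> \<Gamma> \<union> P" unfolding B'_def using B0(1) PEP by blast
  next
    show "cycle_basis V H Ed eps tail B'"
      unfolding cycle_basis_def using B'cw inj indep spanB' by blast
  qed

  have integ: "integral_cycle_spanning_set V H Ed eps tail (\<Gamma> \<union> P)"
    if intG: "integral_cycle_spanning_set V (del_H H E) (Ed - E) eps tail \<Gamma>"
  proof -
    have intG': "sigma tail W \<in> span_of (sigma tail ` \<Gamma>)" if "closed_walk H' Ed' eps W" for W
      using intG that unfolding integral_cycle_spanning_set_def H'_def Ed'_def by blast
    have "sigma tail W \<in> span_of (sigma tail ` (\<Gamma> \<union> P))" if W: "closed_walk H Ed eps W" for W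
    proof -
      define f where "f e = (\<lambda>e'. sigma tail W e * s e * sigma tail (We e) e')" for e
      define u where "u e' = sigma tail W e' - (\<Sum>e\<in>E. f e e')" for e'
      have u0: "\<forall>e\<in>E. u e = 0"
      proof
        fix e' assume e': "e' \<in> E"
        have "u e' = sigma tail W e' - (\<Sum>e\<in>E. sigma tail W e * of_int (sigma tail (We e) e) * of_int (sigma tail (We e) e'))"
          unfolding u_def f_def s_def by simp
        also have "\<dots> = 0"
          by (rule kill[OF finE _ _ e']) (use off s1 in \<open>auto simp: s_def\<close>)
        finally show "u e' = 0" .
      qed
      have fcs: "(\<lambda>e'. of_int (f e e') :: rat) \<in> cycle_space V Ed eps tail" if "e \<in> E" for e
      proof -
        have "(\<lambda>e'. of_int (f e e') :: rat) = (\<lambda>e'. of_int (sigma tail W e * s e) * sigmaQ tail (We e) e')"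
          unfolding f_def sigmaQ_eq by simp
        then show ?thesis using cs_smult[OF sigma_cs[OF G O Pcw[OF We[OF that, THEN conjunct1]]]] by simp
      qed
      have "(\<lambda>e'. of_int (u e') :: rat) = (\<lambda>e'. sigmaQ tail W e' - (\<Sum>e\<in>E. of_int (f e e')))"
        unfolding u_def sigmaQ_eq by simp
      then have ucs: "(\<lambda>e'. of_int (u e') :: rat) \<in> cycle_space V Ed eps tail"
        using cs_diff[OF sigma_cs[OF G O W] cs_sum[OF finE fcs]] by simp
      have "(\<lambda>e'. of_int (u e') :: rat) \<in> cycle_space V Ed' eps tail"
        unfolding Ed'_def by (rule cs_restrict[OF ucs _ gf(1)]) (use u0 in simp)
      then have "u \<in> span_of (sigma tail ` {W. closed_walk H' Ed' eps W})"
        by (rule decomp[OF G' O'])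
      also have "\<dots> \<subseteq> span_of (sigma tail ` \<Gamma>)"
        using intG' by (intro span_span) blast
      also have "\<dots> \<subseteq> span_of (sigma tail ` (\<Gamma> \<union> P))"
        by (intro span_mono) blast
      finally have uspan: "u \<in> span_of (sigma tail ` (\<Gamma> \<union> P))" .
      have "(\<lambda>e'. \<Sum>e\<in>E. f e e') \<in> span_of (sigma tail ` (\<Gamma> \<union> P))"
      proof (rule span_sum[OF finE])
        fix e assume e: "e \<in> E"
        have "sigma tail (We e) \<in> span_of (sigma tail ` (\<Gamma> \<union> P))"
          using We[OF e] by (intro span_base) blast
        then show "f e \<in> span_of (sigma tail ` (\<Gamma> \<union> P))" unfolding f_def by (rule span_smult)
      qed
      with uspan have "(\<lambda>e'. u e' + (\<Sum>e\<in>E. f e e')) \<in> span_of (sigma tail ` (\<Gamma> \<union> P))"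
        by (rule span_add)
      moreover have "(\<lambda>e'. u e' + (\<Sum>e\<in>E. f e e')) = sigma tail W" unfolding u_def by simp
      ultimately show ?thesis by simp
    qed
    then show ?thesis using cs1 unfolding integral_cycle_spanning_set_def by blast
  qed
  show ?thesis using cs1 integ by blast
qed

end
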